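(* Assume the setting and Assumption (A1) of the context. Let $\mathcal F$ and $\mathcal G$ be pointwise measurable classes of real functions on $\mathcal Y$ with envelopes $F$ and $G$ such that $E[(\sum_{\ell=1}^{N_{\mathbf 1}}F(Y_{\ell,\mathbf 1}))^2]<\infty$ and $E[(\sum_{\ell=1}^{N_{\mathbf 1}}G(Y_{\ell,\mathbf 1}))^2]<\infty$. Write $S^f_{\mathbf j}=\sum_{\ell=1}^{N_{\mathbf j}}f(Y_{\ell,\mathbf j})$. Then for every $i\in\{1,\dots,k\}$, $$E\Big[\sup_{(f,g)\in\mathcal F\times\mathcal G}\Big|\frac1{|\mathcal B_i|}\sum_{(\mathbf j,\mathbf j')\in\mathcal B_i}S^f_{\mathbf j}S^g_{\mathbf j'}-\frac1{|\mathcal A_i|}\sum_{(\mathbf j,\mathbf j')\in\mathcal A_i}S^f_{\mathbf j}S^g_{\mathbf j'}\Big|\Big]=o(1)\quad(\underline C\to\infty),$$ and for every $r\ge1$ and $\mathbf e\in\{0,1\}^k$ with $\sum_ie_i=r$, $$\Pi_C^{-2}\,E\Big[\sup_{(f,g)\in\mathcal F\times\mathcal G}\Big|\sum_{(\mathbf j,\mathbf j')\in\mathcal B_{\mathbf e}}S^f_{\mathbf j}S^g_{\mathbf j'}\Big|\Big]=O(\underline C^{-r}).$$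
   Context: Fix $k,l\ge1$, $\mathcal Y\subset\mathbb R^l$. Cells $\mathbf j\in(\mathbb N^* )^k$ with componentwise order $\le$, $\mathbf 1=(1,\dots,1)$. Data array $(N_{\mathbf j},(Y_{\ell,\mathbf j})_{\ell\ge1})_{\mathbf j\ge\mathbf 1}$, $N_{\mathbf j}\in\mathbb N$, $Y_{\ell,\mathbf j}\in\mathcal Y$. $\mathbf C=(C_1,\dots,C_k)$, $\underline C=\min_iC_i$, $\Pi_C=\prod_iC_i$. Assumption (A1): (i) separate exchangeability: for any permutations $\pi_1,\dots,\pi_k$ of $\mathbb N^*$ the array has the same joint law as the array with cell $\mathbf j$ replaced by cell $(\pi_1(j_1),\dots,\pi_k(j_k))$; (ii) for any $\mathbf c\ge\mathbf 1$, the cells $\mathbf 1\le\mathbf j\le\mathbf c$ are jointly independent of the cells $\mathbf j'\ge\mathbf c+\mathbf 1$; (iii) $E(N_{\mathbf 1})>0$; (iv) asymptotics $\underline C\to\infty$ with $\underline C/C_i\to\lambda_i\ge0$. Sets of pairs (all with $\mathbf 1\le\mathbf j,\mathbf j'\le\mathbf C$): $\mathcal A_i=\{(\mathbf j,\mathbf j'):j_i=j'_i,\ j_s\ne j'_s\ \forall s\ne i\}$; $\mathcal B_i=\{(\mathbf j,\mathbf j'):j_i=j'_i\}$; for $\mathbf e\in\{0,1\}^k$, $\mathcal B_{\mathbf e}=\{(\mathbf j,\mathbf j'):\ e_i=1\Rightarrow j_i=j'_i\ \forall i\}$. Pointwise measurable: a countable subclass whose pointwise limits give all elements; envelope $F\ge\sup|f|$.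 *)

theory Defs
  imports "HOL-Probability.Probability" "HOL-Combinatorics.Permutations"
begin

text \<open>Cells j in (N*)^k are encoded as functions nat => nat with j i >= 1 for i < k
  and j i = 0 for i >= k (coordinates are indexed 0..k-1).\<close>

definition cells :: "nat \<Rightarrow> (nat \<Rightarrow> nat) set" where
  "cells k = {j. (\<forall>i<k. 1 \<le> j i) \<and> (\<forall>i\<ge>k. j i = 0)}"

definition one_cell :: "nat \<Rightarrow> nat \<Rightarrow> nat" where
  "one_cell k = (\<lambda>i. if i < k then 1 else 0)"

definition box :: "nat \<Rightarrow> (nat \<Rightarrow> nat) \<Rightarrow> (nat \<Rightarrow> nat) set" where
  "box k C = {j \<in> cells k. \<forall>i<k. j i \<le> C i}"

definition setA :: "nat \<Rightarrow> (nat \<Rightarrow> nat) \<Rightarrow> nat \<Rightarrow> ((nat \<Rightarrow> nat) \<times> (nat \<Rightarrow> nat)) set" where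
  "setA k C i = {(j, j'). j \<in> box k C \<and> j' \<in> box k C \<and> j i = j' i \<and>
                          (\<forall>s<k. s \<noteq> i \<longrightarrow> j s \<noteq> j' s)}"

definition setB :: "nat \<Rightarrow> (nat \<Rightarrow> nat) \<Rightarrow> nat \<Rightarrow> ((nat \<Rightarrow> nat) \<times> (nat \<Rightarrow> nat)) set" where
  "setB k C i = {(j, j'). j \<in> box k C \<and> j' \<in> box k C \<and> j i = j' i}"

definition setBe :: "nat \<Rightarrow> (nat \<Rightarrow> nat) \<Rightarrow> (nat \<Rightarrow> nat) \<Rightarrow> ((nat \<Rightarrow> nat) \<times> (nat \<Rightarrow> nat)) set" where
  "setBe k C e = {(j, j'). j \<in> box k C \<and> j' \<in> box k C \<and> (\<forall>i<k. e i = 1 \<longrightarrow> j i = j' i)}"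

text \<open>Measurable space of the data of one cell: (N_j, (Y_{l,j})_l).\<close>
definition cell_space :: "(nat \<times> (nat \<Rightarrow> 'b::topological_space)) measure" where
  "cell_space = count_space UNIV \<Otimes>\<^sub>M (\<Pi>\<^sub>M l\<in>UNIV. borel)"

definition array_space :: "nat \<Rightarrow> (nat \<Rightarrow> nat) set \<Rightarrow>
    ((nat \<Rightarrow> nat) \<Rightarrow> (nat \<times> (nat \<Rightarrow> 'b::topological_space))) measure" where
  "array_space k J = (\<Pi>\<^sub>M j\<in>J. cell_space)"

definition data_array :: "('a \<Rightarrow> (nat \<Rightarrow> nat) \<Rightarrow> nat) \<Rightarrow> ('a \<Rightarrow> nat \<Rightarrow> (nat \<Rightarrow> nat) \<Rightarrow> 'b)
    \<Rightarrow> (nat \<Rightarrow> nat) set \<Rightarrow> 'a \<Rightarrow> (nat \<Rightarrow> nat) \<Rightarrow> (nat \<times> (nat \<Rightarrow> 'b))" where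
  "data_array N Y J \<omega> = (\<lambda>j\<in>J. (N \<omega> j, \<lambda>l. Y \<omega> l j))"

definition permute_cell :: "nat \<Rightarrow> (nat \<Rightarrow> nat \<Rightarrow> nat) \<Rightarrow> (nat \<Rightarrow> nat) \<Rightarrow> (nat \<Rightarrow> nat)" where
  "permute_cell k \<pi> j = (\<lambda>i. if i < k then \<pi> i (j i) else 0)"

definition A1 :: "'a measure \<Rightarrow> nat \<Rightarrow> ('a \<Rightarrow> (nat \<Rightarrow> nat) \<Rightarrow> nat)
    \<Rightarrow> ('a \<Rightarrow> nat \<Rightarrow> (nat \<Rightarrow> nat) \<Rightarrow> 'b::topological_space) \<Rightarrow> bool" where
  "A1 M k N Y \<longleftrightarrow>
     \<comment> \<open>(i) separate exchangeability\<close>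
     (\<forall>\<pi>. (\<forall>i<k. \<pi> i permutes {1..}) \<longrightarrow>
        distr M (array_space k (cells k)) (data_array N Y (cells k)) =
        distr M (array_space k (cells k))
          (\<lambda>\<omega>. \<lambda>j\<in>cells k. data_array N Y (cells k) \<omega> (permute_cell k \<pi> j))) \<and>
     \<comment> \<open>(ii) dissociation\<close>
     (\<forall>c\<in>cells k.
        prob_space.indep_var M
          (array_space k {j\<in>cells k. \<forall>i<k. j i \<le> c i})
          (data_array N Y {j\<in>cells k. \<forall>i<k. j i \<le> c i})
          (array_space k {j\<in>cells k. \<forall>i<k. c i + 1 \<le> j i})
          (data_array N Y {j\<in>cells k. \<forall>i<k. c i + 1 \<le> j i})) \<and>
     \<comment> \<open>(iii) E(N_1) > 0\<close>
     (\<integral>\<^sup>+\<omega>. ennreal (real (N \<omega> (one_cell k))) \<partial>M) > 0"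

definition pointwise_measurable :: "'b set \<Rightarrow> ('b \<Rightarrow> real) set \<Rightarrow> bool" where
  "pointwise_measurable Ys F \<longleftrightarrow>
     (\<exists>G\<subseteq>F. countable G \<and>
        (\<forall>f\<in>F. \<exists>s. (\<forall>n. s n \<in> G) \<and> (\<forall>y\<in>Ys. (\<lambda>n. s n y) \<longlonglongrightarrow> f y)))"

definition Ssum :: "('a \<Rightarrow> (nat \<Rightarrow> nat) \<Rightarrow> nat) \<Rightarrow> ('a \<Rightarrow> nat \<Rightarrow> (nat \<Rightarrow> nat) \<Rightarrow> 'b)
    \<Rightarrow> ('b \<Rightarrow> real) \<Rightarrow> 'a \<Rightarrow> (nat \<Rightarrow> nat) \<Rightarrow> real" where
  "Ssum N Y f \<omega> j = (\<Sum>l=1..N \<omega> j. f (Y \<omega> l j))"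

end

theory Submission
  imports Defs
begin


lemma cellmeas:
  fixes N :: "'a \<Rightarrow> (nat \<Rightarrow> nat) \<Rightarrow> nat" and Y :: "'a \<Rightarrow> nat \<Rightarrow> (nat \<Rightarrow> nat) \<Rightarrow> 'b::topological_space"
  assumes "(\<lambda>\<omega>. N \<omega> j) \<in> measurable M (count_space UNIV)"
    and "\<And>l. (\<lambda>\<omega>. Y \<omega> l j) \<in> borel_measurable M"
  shows "(\<lambda>\<omega>. (N \<omega> j, \<lambda>l. Y \<omega> l j)) \<in> measurable M cell_space"
  unfolding cell_space_def
proof (rule measurable_Pair)
  show "(\<lambda>\<omega>. N \<omega> j) \<in> measurable M (count_space UNIV)" by fact
  have "(\<lambda>\<omega>. \<lambda>l\<in>UNIV. Y \<omega> l j) \<in> measurable M (\<Pi>\<^sub>M l\<in>UNIV. borel)"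
    by (rule measurable_restrict) (use assms in auto)
  then show "(\<lambda>\<omega> l. Y \<omega> l j) \<in> measurable M (\<Pi>\<^sub>M l\<in>UNIV. borel)" by (simp add: restrict_def)
qed

lemma hmeas:
  fixes h :: "'b::topological_space \<Rightarrow> real"
  assumes "h \<in> borel_measurable borel"
  shows "(\<lambda>x::nat \<times> (nat \<Rightarrow> 'b). ennreal ((\<Sum>l=1..fst x. h (snd x l))\<^sup>2)) \<in> borel_measurable cell_space"
proof (rule measurable_compose_countable[of "\<lambda>n x. ennreal ((\<Sum>l=1..n. h (snd x l))\<^sup>2)" _ _ fst])
  show "fst \<in> measurable cell_space (count_space UNIV)" unfolding cell_space_def by (rule measurable_fst)
  fix n
  show "(\<lambda>x. ennreal ((\<Sum>l = 1..n. h (snd x l))\<^sup>2)) \<in> borel_measurable cell_space"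
    unfolding cell_space_def using assms by measurable
qed

lemma exch:
  fixes N :: "'a \<Rightarrow> (nat \<Rightarrow> nat) \<Rightarrow> nat" and Y :: "'a \<Rightarrow> nat \<Rightarrow> (nat \<Rightarrow> nat) \<Rightarrow> 'b::topological_space"
  assumes A1: "A1 M k N Y" and j: "j \<in> cells k"
    and N_meas: "\<And>j. j \<in> cells k \<Longrightarrow> (\<lambda>\<omega>. N \<omega> j) \<in> measurable M (count_space UNIV)"
    and Y_meas: "\<And>l j. j \<in> cells k \<Longrightarrow> (\<lambda>\<omega>. Y \<omega> l j) \<in> borel_measurable M"
    and h: "h \<in> borel_measurable cell_space"
  shows "(\<integral>\<^sup>+\<omega>. h (N \<omega> j, \<lambda>l. Y \<omega> l j) \<partial>M) = (\<integral>\<^sup>+\<omega>. h (N \<omega> (one_cell k), \<lambda>l. Y \<omega> l (one_cell k)) \<partial>M)"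
proof -
  define \<pi> where "\<pi> = (\<lambda>i. Transposition.transpose (1::nat) (j i))"
  have perm: "\<forall>i<k. \<pi> i permutes {1..}"
    using j unfolding \<pi>_def cells_def by (auto intro!: permutes_swap_id)
  have one: "one_cell k \<in> cells k" unfolding one_cell_def cells_def by auto
  have pc: "permute_cell k \<pi> (one_cell k) = j"
    using j unfolding permute_cell_def \<pi>_def one_cell_def cells_def by auto
  have pcc: "permute_cell k \<pi> c \<in> cells k" if "c \<in> cells k" for c
    using perm that unfolding permute_cell_def cells_def
    by (auto simp: permutes_def) (metis atLeast_iff permutes_in_image perm)
  define D where "D = data_array N Y (cells k)"
  define D' where "D' = (\<lambda>\<omega>. \<lambda>j\<in>cells k. D \<omega> (permute_cell k \<pi> j))"
  have eq: "distr M (array_space k (cells k)) D = distr M (array_space k (cells k)) D'"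
    using A1 perm unfolding A1_def D_def D'_def by blast
  have Dm: "D \<in> measurable M (array_space k (cells k))"
    unfolding D_def data_array_def array_space_def
    by (rule measurable_restrict) (intro cellmeas N_meas Y_meas; simp)
  have D'm: "D' \<in> measurable M (array_space k (cells k))"
    unfolding D'_def D_def data_array_def array_space_def using pcc
    by (intro measurable_restrict) (auto intro!: cellmeas N_meas Y_meas)
  define \<phi> where "\<phi> = (\<lambda>x::(nat \<Rightarrow> nat) \<Rightarrow> (nat \<times> (nat \<Rightarrow> 'b)). h (x (one_cell k)))"
  have \<phi>m: "\<phi> \<in> borel_measurable (array_space k (cells k))"
    unfolding \<phi>_def array_space_def
    by (rule measurable_compose[OF measurable_component_singleton[OF one] h])
  have "(\<integral>\<^sup>+\<omega>. \<phi> (D \<omega>) \<partial>M) = (\<integral>\<^sup>+x. \<phi> x \<partial>distr M (array_space k (cells k)) D)"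
    using Dm \<phi>m by (simp add: nn_integral_distr)
  also have "\<dots> = (\<integral>\<^sup>+x. \<phi> x \<partial>distr M (array_space k (cells k)) D')" by (simp add: eq)
  also have "\<dots> = (\<integral>\<^sup>+\<omega>. \<phi> (D' \<omega>) \<partial>M)"
    using D'm \<phi>m by (simp add: nn_integral_distr)
  finally show ?thesis
    unfolding \<phi>_def D'_def D_def data_array_def using one pc j by simp
qed



lemma card_pairs:
  fixes R :: "nat \<Rightarrow> (nat \<times> nat) set"
  shows "card {(j, j'). j \<in> box k C \<and> j' \<in> box k C \<and> (\<forall>s<k. (j s, j' s) \<in> R s)}
       = (\<Prod>s<k. card (R s \<inter> ({1..C s} \<times> {1..C s})))"
proof -
  let ?S = "{(j, j'). j \<in> box k C \<and> j' \<in> box k C \<and> (\<forall>s<k. (j s, j' s) \<in> R s)}"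
  let ?T = "PiE {..<k} (\<lambda>s. R s \<inter> ({1..C s} \<times> {1..C s}))"
  have "bij_betw (\<lambda>(j, j'). \<lambda>s\<in>{..<k}. (j s, j' s)) ?S ?T"
  proof (rule bij_betw_byWitness[where f' = "\<lambda>x. (\<lambda>s. if s < k then fst (x s) else 0, \<lambda>s. if s < k then snd (x s) else 0)"])
    show "\<forall>a\<in>?S. (\<lambda>x. (\<lambda>s. if s < k then fst (x s) else 0, \<lambda>s. if s < k then snd (x s) else 0)) ((\<lambda>(j, j'). \<lambda>s\<in>{..<k}. (j s, j' s)) a) = a"
      by (auto simp: box_def cells_def fun_eq_iff)
    show "\<forall>a'\<in>?T. (\<lambda>(j, j'). \<lambda>s\<in>{..<k}. (j s, j' s)) ((\<lambda>x. (\<lambda>s. if s < k then fst (x s) else 0, \<lambda>s. if s < k then snd (x s) else 0)) a') = a'"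
      by (auto simp: fun_eq_iff PiE_iff extensional_def)
    show "(\<lambda>(j, j'). \<lambda>s\<in>{..<k}. (j s, j' s)) ` ?S \<subseteq> ?T"
      by (auto simp: box_def cells_def PiE_def Pi_def)
    show "(\<lambda>x. (\<lambda>s. if s < k then fst (x s) else 0, \<lambda>s. if s < k then snd (x s) else 0)) ` ?T \<subseteq> ?S"
      by (force simp: box_def cells_def PiE_iff)
  qed
  then have "card ?S = card ?T" by (rule bij_betw_same_card)
  also have "\<dots> = (\<Prod>s<k. card (R s \<inter> ({1..C s} \<times> {1..C s})))" by (simp add: card_PiE)
  finally show ?thesis .
qed

lemma card_diag: "card ({(a, b). a = b} \<inter> ({1..c} \<times> {1..c::nat})) = c"
proof -
  have "{(a, b). a = b} \<inter> ({1..c} \<times> {1..c::nat}) = (\<lambda>a. (a, a)) ` {1..c}" by auto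
  then show ?thesis by (simp add: card_image inj_on_def)
qed

lemma card_offdiag: "card ({(a, b). a \<noteq> b} \<inter> ({1..c} \<times> {1..c::nat})) = c * c - c"
proof -
  have "{(a, b). a \<noteq> b} \<inter> ({1..c} \<times> {1..c::nat}) = ({1..c} \<times> {1..c}) - ({(a, b). a = b} \<inter> ({1..c} \<times> {1..c::nat}))" by auto
  then show ?thesis using card_diag[of c] by (simp add: card_Diff_subset card_cartesian_product)
qed

lemma card_full: "card (UNIV \<inter> ({1..c} \<times> {1..c::nat})) = c * c"
  by (simp add: card_cartesian_product)

lemma card_setBe: "card (setBe k C e) = (\<Prod>s<k. if e s = 1 then C s else C s * C s)"
proof -
  have "setBe k C e = {(j, j'). j \<in> box k C \<and> j' \<in> box k C \<and> (\<forall>s<k. (j s, j' s) \<in> (if e s = 1 then {(a, b). a = b} else UNIV))}"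
    unfolding setBe_def by (auto split: if_splits)
  then have "card (setBe k C e) = (\<Prod>s<k. card ((if e s = 1 then {(a, b). a = b} else UNIV) \<inter> ({1..C s} \<times> {1..C s})))"
    by (simp only: card_pairs)
  also have "\<dots> = (\<Prod>s<k. if e s = 1 then C s else C s * C s)"
    apply (rule prod.cong[OF refl])
    subgoal for s using card_diag[of "C s"] card_full[of "C s"] by (cases "s = i") simp_all
    done
  finally show ?thesis .
qed

lemma card_setB: "i < k \<Longrightarrow> card (setB k C i) = (\<Prod>s<k. if s = i then C s else C s * C s)"
proof -
  assume i: "i < k"
  have "setB k C i = {(j, j'). j \<in> box k C \<and> j' \<in> box k C \<and> (\<forall>s<k. (j s, j' s) \<in> (if s = i then {(a, b). a = b} else UNIV))}"
    unfolding setB_def using i by (auto split: if_splits)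
  then have "card (setB k C i) = (\<Prod>s<k. card ((if s = i then {(a, b). a = b} else UNIV) \<inter> ({1..C s} \<times> {1..C s})))"
    by (simp only: card_pairs)
  also have "\<dots> = (\<Prod>s<k. if s = i then C s else C s * C s)"
    apply (rule prod.cong[OF refl])
    subgoal for s using card_diag[of "C s"] card_full[of "C s"] by (cases "s = i") simp_all
    done
  finally show ?thesis .
qed

lemma card_setA: "i < k \<Longrightarrow> card (setA k C i) = (\<Prod>s<k. if s = i then C s else C s * C s - C s)"
proof -
  assume i: "i < k"
  have "setA k C i = {(j, j'). j \<in> box k C \<and> j' \<in> box k C \<and> (\<forall>s<k. (j s, j' s) \<in> (if s = i then {(a, b). a = b} else {(a, b). a \<noteq> b}))}"
    unfolding setA_def using i by (auto split: if_splits)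
  then have "card (setA k C i) = (\<Prod>s<k. card ((if s = i then {(a, b). a = b} else {(a, b). a \<noteq> b}) \<inter> ({1..C s} \<times> {1..C s})))"
    by (simp only: card_pairs)
  also have "\<dots> = (\<Prod>s<k. if s = i then C s else C s * C s - C s)"
    apply (rule prod.cong[OF refl])
    subgoal for s using card_diag[of "C s"] card_offdiag[of "C s"] by (cases "s = i") simp_all
    done
  finally show ?thesis .
qed

lemma finite_box: "finite (box k C)"
proof -
  have "box k C \<subseteq> (\<lambda>x. \<lambda>s. if s < k then x s else 0) ` PiE {..<k} (\<lambda>s. {1..C s})"
  proof
    fix j assume "j \<in> box k C"
    then show "j \<in> (\<lambda>x. \<lambda>s. if s < k then x s else 0) ` PiE {..<k} (\<lambda>s. {1..C s})"
      by (intro image_eqI[where x="restrict j {..<k}"]) (auto simp: box_def cells_def fun_eq_iff PiE_def Pi_def)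
  qed
  then show ?thesis by (rule finite_subset) (auto intro!: finite_PiE)
qed

lemma finite_pairs: "finite {(j, j'). j \<in> box k C \<and> j' \<in> box k C \<and> P j j'}"
  by (rule finite_subset[of _ "box k C \<times> box k C"]) (auto simp: finite_box)



lemma diff_avg:
  fixes x w :: "'p \<Rightarrow> real"
  assumes fin: "finite B" and sub: "A \<subseteq> B" and pos: "card A > 0"
    and bd: "\<And>p. p \<in> B \<Longrightarrow> \<bar>x p\<bar> \<le> w p"
  shows "\<bar>(\<Sum>p\<in>B. x p) / real (card B) - (\<Sum>p\<in>A. x p) / real (card A)\<bar>
         \<le> (\<Sum>p\<in>B. (if p \<in> A then 1 / real (card A) - 1 / real (card B) else 1 / real (card B)) * w p)"
proof -
  define a where "a = real (card A)"
  define b where "b = real (card B)"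
  have finA: "finite A" using fin sub finite_subset by blast
  have ab: "a \<le> b" unfolding a_def b_def using card_mono[OF fin sub] by simp
  have a0: "a > 0" unfolding a_def using pos by simp
  have cge: "1 / a - 1 / b \<ge> 0" using ab a0 by (simp add: frac_le)
  have sB: "(\<Sum>p\<in>B. x p) = (\<Sum>p\<in>B - A. x p) + (\<Sum>p\<in>A. x p)"
    using sum.subset_diff[OF sub fin] by simp
  have "(\<Sum>p\<in>B. x p) / b - (\<Sum>p\<in>A. x p) / a = (\<Sum>p\<in>B - A. x p * (1 / b)) - (\<Sum>p\<in>A. x p * (1 / a - 1 / b))"
  proof -
    have e1: "(\<Sum>p\<in>B - A. x p * (1 / b)) = (\<Sum>p\<in>B - A. x p) * (1 / b)" by (simp add: sum_divide_distrib)
    have e2: "(\<Sum>p\<in>A. x p * (1 / a - 1 / b)) = (\<Sum>p\<in>A. x p) * (1 / a - 1 / b)" by (simp add: sum_distrib_right)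
    have b0: "b > 0" using a0 ab by simp
    show ?thesis unfolding sB e1 e2 using a0 b0 by (simp add: field_simps)
  qed
  then have "\<bar>(\<Sum>p\<in>B. x p) / b - (\<Sum>p\<in>A. x p) / a\<bar> \<le> \<bar>\<Sum>p\<in>B - A. x p * (1 / b)\<bar> + \<bar>\<Sum>p\<in>A. x p * (1 / a - 1 / b)\<bar>"
    by simp
  also have "\<dots> \<le> (\<Sum>p\<in>B - A. \<bar>x p * (1 / b)\<bar>) + (\<Sum>p\<in>A. \<bar>x p * (1 / a - 1 / b)\<bar>)"
    by (intro add_mono sum_abs)
  also have "\<dots> \<le> (\<Sum>p\<in>B - A. (1 / b) * w p) + (\<Sum>p\<in>A. (1 / a - 1 / b) * w p)"
    using cge a0 ab sub bd
    apply (intro add_mono sum_mono)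
    subgoal for p using bd[of p] a0 ab by (auto simp: abs_mult intro!: divide_right_mono)
    subgoal for p using mult_right_mono[OF bd[of p] cge] sub cge by (auto simp: abs_mult mult.commute)
    done
  also have "\<dots> = (\<Sum>p\<in>B. (if p \<in> A then 1 / a - 1 / b else 1 / b) * w p)"
    using sum.subset_diff[OF sub fin, of "\<lambda>p. (if p \<in> A then 1 / a - 1 / b else 1 / b) * w p"]
    by (simp add: finA)
  finally show ?thesis unfolding a_def b_def .
qed

lemma diff_avg_coef:
  assumes fin: "finite B" and sub: "A \<subseteq> B" and pos: "card A > 0"
  shows "(\<Sum>p\<in>B. (if p \<in> A then 1 / real (card A) - 1 / real (card B) else 1 / real (card B)))
     = 2 - 2 * real (card A) / real (card B)"
proof -
  define a where "a = real (card A)"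
  define b where "b = real (card B)"
  have finA: "finite A" using fin sub finite_subset by blast
  have a0: "a > 0" unfolding a_def using pos by simp
  have ab: "a \<le> b" unfolding a_def b_def using card_mono[OF fin sub] by simp
  have "(\<Sum>p\<in>B. (if p \<in> A then 1 / a - 1 / b else 1 / b)) = (\<Sum>p\<in>B - A. 1 / b) + (\<Sum>p\<in>A. 1 / a - 1 / b)"
    using sum.subset_diff[OF sub fin, of "\<lambda>p. (if p \<in> A then 1 / a - 1 / b else 1 / b)"]
    by (simp add: finA)
  also have "\<dots> = (b - a) / b + a * (1 / a - 1 / b)"
    using card_Diff_subset[OF finA sub] card_mono[OF fin sub] unfolding a_def b_def
    by (simp add: of_nat_diff)
  also have "\<dots> = 2 - 2 * a / b" using a0 ab by (simp add: field_simps)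
  finally show ?thesis unfolding a_def b_def .
qed

lemma coef_nonneg:
  assumes fin: "finite B" and sub: "A \<subseteq> B" and pos: "card A > 0"
  shows "(if p \<in> A then 1 / real (card A) - 1 / real (card B) else 1 / real (card B)) \<ge> 0"
  using card_mono[OF fin sub] pos by (auto simp: frac_le)

lemma ratio_lim:
  fixes C :: "nat \<Rightarrow> nat \<Rightarrow> nat"
  assumes C_lim: "filterlim (\<lambda>n. Min ((C n) ` {..<k})) at_top sequentially"
    and C_pos: "\<And>n s. s < k \<Longrightarrow> C n s \<ge> 1"
  shows "((\<lambda>n. real (\<Prod>s<k. if s = i then C n s else C n s * C n s - C n s)
           / real (\<Prod>s<k. if s = i then C n s else C n s * C n s)) \<longlongrightarrow> 1) sequentially"
proof -
  have inv0: "((\<lambda>n. 1 / real (C n s)) \<longlongrightarrow> 0) sequentially" if s: "s < k" for s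
  proof -
    have f1: "filterlim (\<lambda>n. real (Min ((C n) ` {..<k}))) at_top sequentially"
      by (rule filterlim_compose[OF filterlim_real_sequentially C_lim])
    have f2: "\<forall>n. real (Min ((C n) ` {..<k})) \<le> real (C n s)" using s by simp
    have "filterlim (\<lambda>n. real (C n s)) at_top sequentially"
      by (rule filterlim_at_top_mono[OF f1 always_eventually[OF f2]])
    then show ?thesis using tendsto_inverse_0_at_top by (simp add: inverse_eq_divide)
  qed
  have inv1: "((\<lambda>n. 1 - 1 / real (C n s)) \<longlongrightarrow> 1) sequentially" if s: "s < k" for s
    using tendsto_diff[OF tendsto_const inv0[OF s], of 1] by simp
  have lim: "((\<lambda>n. \<Prod>s<k. if s = i then 1 else 1 - 1 / real (C n s)) \<longlongrightarrow> (\<Prod>s<k. if s = i then 1 else 1)) sequentially"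
    apply (intro tendsto_prod)
    subgoal for s by (cases "s = i") (auto intro: inv1)
    done
  have eq: "real (\<Prod>s<k. if s = i then C n s else C n s * C n s - C n s)
           / real (\<Prod>s<k. if s = i then C n s else C n s * C n s)
        = (\<Prod>s<k. if s = i then 1 else 1 - 1 / real (C n s))" for n
  proof -
    have "real (\<Prod>s<k. if s = i then C n s else C n s * C n s - C n s)
           / real (\<Prod>s<k. if s = i then C n s else C n s * C n s)
        = (\<Prod>s<k. real (if s = i then C n s else C n s * C n s - C n s)
           / real (if s = i then C n s else C n s * C n s))"
      by (simp add: prod_dividef)
    also have "\<dots> = (\<Prod>s<k. if s = i then 1 else 1 - 1 / real (C n s))"
    proof (rule prod.cong[OF refl])
      fix s assume "s \<in> {..<k}"
      then have c: "C n s \<ge> 1" using C_pos by simp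
      then have "C n s \<le> C n s * C n s" by simp
      then show "real (if s = i then C n s else C n s * C n s - C n s)
           / real (if s = i then C n s else C n s * C n s) = (if s = i then 1 else 1 - 1 / real (C n s))"
        using c by (auto simp: of_nat_diff field_simps)
    qed
    finally show ?thesis .
  qed
  show ?thesis unfolding eq using lim by simp
qed


theorem lemma11:
  fixes M :: "'a measure" and k :: nat
    and N :: "'a \<Rightarrow> (nat \<Rightarrow> nat) \<Rightarrow> nat"
    and Y :: "'a \<Rightarrow> nat \<Rightarrow> (nat \<Rightarrow> nat) \<Rightarrow> real ^ 'l"
    and Ys :: "(real ^ 'l) set"
    and \<F> \<G> :: "(real ^ 'l \<Rightarrow> real) set"
    and Fe Ge :: "real ^ 'l \<Rightarrow> real"
    and C :: "nat \<Rightarrow> nat \<Rightarrow> nat"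
    and lam :: "nat \<Rightarrow> real"
  assumes M: "prob_space M"
    and k: "k \<ge> 1"
    and N_meas: "\<And>j. j \<in> cells k \<Longrightarrow> (\<lambda>\<omega>. N \<omega> j) \<in> measurable M (count_space UNIV)"
    and Y_meas: "\<And>l j. j \<in> cells k \<Longrightarrow> (\<lambda>\<omega>. Y \<omega> l j) \<in> borel_measurable M"
    and Y_in: "\<And>\<omega> l j. \<omega> \<in> space M \<Longrightarrow> j \<in> cells k \<Longrightarrow> Y \<omega> l j \<in> Ys"
    and A1: "A1 M k N Y"
    and F_pm: "pointwise_measurable Ys \<F>" and G_pm: "pointwise_measurable Ys \<G>"
    and F_meas: "\<And>f. f \<in> \<F> \<Longrightarrow> f \<in> borel_measurable borel"
    and G_meas: "\<And>g. g \<in> \<G> \<Longrightarrow> g \<in> borel_measurable borel"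
    and Fe_meas: "Fe \<in> borel_measurable borel" and Ge_meas: "Ge \<in> borel_measurable borel"
    and F_env: "\<And>f y. f \<in> \<F> \<Longrightarrow> y \<in> Ys \<Longrightarrow> \<bar>f y\<bar> \<le> Fe y"
    and G_env: "\<And>g y. g \<in> \<G> \<Longrightarrow> y \<in> Ys \<Longrightarrow> \<bar>g y\<bar> \<le> Ge y"
    and F_mom: "(\<integral>\<^sup>+\<omega>. ennreal ((Ssum N Y Fe \<omega> (one_cell k))\<^sup>2) \<partial>M) < \<infinity>"
    and G_mom: "(\<integral>\<^sup>+\<omega>. ennreal ((Ssum N Y Ge \<omega> (one_cell k))\<^sup>2) \<partial>M) < \<infinity>"
    and C_pos: "\<And>n i. i < k \<Longrightarrow> C n i \<ge> 1"
    and C_lim: "filterlim (\<lambda>n. Min ((C n) ` {..<k})) at_top sequentially"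
    and C_ratio: "\<And>i. i < k \<Longrightarrow> lam i \<ge> 0 \<and>
                    (\<lambda>n. real (Min ((C n) ` {..<k})) / real (C n i)) \<longlonglongrightarrow> lam i"
  shows
    "(\<forall>i<k.
       ((\<lambda>n. \<integral>\<^sup>+\<omega>. (SUP fg\<in>\<F> \<times> \<G>. ennreal \<bar>
            (\<Sum>(j, j')\<in>setB k (C n) i. Ssum N Y (fst fg) \<omega> j * Ssum N Y (snd fg) \<omega> j')
               / real (card (setB k (C n) i))
          - (\<Sum>(j, j')\<in>setA k (C n) i. Ssum N Y (fst fg) \<omega> j * Ssum N Y (snd fg) \<omega> j')
               / real (card (setA k (C n) i))\<bar>) \<partial>M)
        \<longlongrightarrow> 0) sequentially)
     \<and>
     (\<forall>r e. r \<ge> 1 \<longrightarrow> (\<forall>i<k. e i \<in> {0, 1}) \<longrightarrow> (\<Sum>i<k. e i) = r \<longrightarrow>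
       (\<exists>K::real. eventually (\<lambda>n.
          ennreal (1 / (real (\<Prod>i<k. C n i))\<^sup>2) *
          (\<integral>\<^sup>+\<omega>. (SUP fg\<in>\<F> \<times> \<G>. ennreal \<bar>
            \<Sum>(j, j')\<in>setBe k (C n) e. Ssum N Y (fst fg) \<omega> j * Ssum N Y (snd fg) \<omega> j'\<bar>) \<partial>M)
          \<le> ennreal (K * real (Min ((C n) ` {..<k})) powr (- real r))) sequentially))"
proof -
  let ?one = "one_cell k"
  have one: "?one \<in> cells k" unfolding one_cell_def cells_def by auto
  define aF where "aF = (\<integral>\<^sup>+\<omega>. ennreal ((Ssum N Y Fe \<omega> ?one)\<^sup>2) \<partial>M)"
  define aG where "aG = (\<integral>\<^sup>+\<omega>. ennreal ((Ssum N Y Ge \<omega> ?one)\<^sup>2) \<partial>M)"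
  define d where "d = (enn2real aF + enn2real aG) / 2"
  have d0: "d \<ge> 0" unfolding d_def by simp
  have Sm: "(\<lambda>\<omega>. Ssum N Y h \<omega> j) \<in> borel_measurable M"
    if h: "h \<in> borel_measurable borel" and j: "j \<in> cells k" for h j
    unfolding Ssum_def
  proof (rule measurable_compose_countable[of "\<lambda>n \<omega>. \<Sum>l=1..n. h (Y \<omega> l j)" _ _ "\<lambda>\<omega>. N \<omega> j"])
    show "(\<lambda>\<omega>. N \<omega> j) \<in> measurable M (count_space UNIV)" using N_meas[OF j] .
    fix n show "(\<lambda>\<omega>. \<Sum>l = 1..n. h (Y \<omega> l j)) \<in> borel_measurable M"
      by (intro borel_measurable_sum measurable_compose[OF Y_meas[OF j] h])
  qed
  have sqF: "(\<integral>\<^sup>+\<omega>. ennreal ((Ssum N Y Fe \<omega> j)\<^sup>2) \<partial>M) = aF" if j: "j \<in> cells k" for j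
    using exch[OF A1 j N_meas Y_meas hmeas[OF Fe_meas]] unfolding aF_def Ssum_def by simp
  have sqG: "(\<integral>\<^sup>+\<omega>. ennreal ((Ssum N Y Ge \<omega> j)\<^sup>2) \<partial>M) = aG" if j: "j \<in> cells k" for j
    using exch[OF A1 j N_meas Y_meas hmeas[OF Ge_meas]] unfolding aG_def Ssum_def by simp
  have aFt: "aF < top" using F_mom unfolding aF_def by simp
  have aGt: "aG < top" using G_mom unfolding aG_def by simp
  define w where "w = (\<lambda>(p::(nat \<Rightarrow> nat) \<times> (nat \<Rightarrow> nat)) \<omega>. ((Ssum N Y Fe \<omega> (fst p))\<^sup>2 + (Ssum N Y Ge \<omega> (snd p))\<^sup>2) / 2)"
  have w0: "w p \<omega> \<ge> 0" for p \<omega> unfolding w_def by simp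
  have wm: "(\<lambda>\<omega>. w p \<omega>) \<in> borel_measurable M" if p: "p \<in> cells k \<times> cells k" for p
    unfolding w_def using p
    by (intro borel_measurable_divide borel_measurable_add borel_measurable_power Sm Fe_meas Ge_meas
        measurable_const) auto
  have wint: "(\<integral>\<^sup>+\<omega>. ennreal (w p \<omega>) \<partial>M) = ennreal d" if p: "p \<in> cells k \<times> cells k" for p
  proof -
    have e: "ennreal (w p \<omega>) = ennreal (1/2) * (ennreal ((Ssum N Y Fe \<omega> (fst p))\<^sup>2) + ennreal ((Ssum N Y Ge \<omega> (snd p))\<^sup>2))" for \<omega>
      unfolding w_def
      apply (subst ennreal_plus[symmetric], simp, simp)
      apply (subst ennreal_mult[symmetric], simp, simp)
      apply (simp add: field_simps)
      done
    have m1: "(\<lambda>\<omega>. ennreal ((Ssum N Y Fe \<omega> (fst p))\<^sup>2)) \<in> borel_measurable M"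
      using p by (intro measurable_compose[OF _ measurable_ennreal] borel_measurable_power Sm Fe_meas) auto
    have m2: "(\<lambda>\<omega>. ennreal ((Ssum N Y Ge \<omega> (snd p))\<^sup>2)) \<in> borel_measurable M"
      using p by (intro measurable_compose[OF _ measurable_ennreal] borel_measurable_power Sm Ge_meas) auto
    have "(\<integral>\<^sup>+\<omega>. ennreal (w p \<omega>) \<partial>M) = ennreal (1/2) * (aF + aG)"
      unfolding e using p m1 m2
      by (simp add: nn_integral_cmult nn_integral_add sqF[of "fst p"] sqG[of "snd p"] mem_Times_iff)
    also have "\<dots> = ennreal (1/2) * (ennreal (enn2real aF) + ennreal (enn2real aG))"
      using aFt aGt by simp
    also have "\<dots> = ennreal d" unfolding d_def
      apply (subst ennreal_plus[symmetric], simp, simp)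
      apply (subst ennreal_mult[symmetric], simp, simp)
      apply (simp add: field_simps)
      done
    finally show ?thesis .
  qed
  have intsum: "(\<integral>\<^sup>+\<omega>. ennreal (\<Sum>p\<in>P. c p * w p \<omega>) \<partial>M) = ennreal (d * (\<Sum>p\<in>P. c p))"
    if P: "finite P" "P \<subseteq> cells k \<times> cells k" and c: "\<And>p. p \<in> P \<Longrightarrow> c p \<ge> 0" for P c
  proof -
    have "(\<integral>\<^sup>+\<omega>. ennreal (\<Sum>p\<in>P. c p * w p \<omega>) \<partial>M) = (\<integral>\<^sup>+\<omega>. (\<Sum>p\<in>P. ennreal (c p) * ennreal (w p \<omega>)) \<partial>M)"
      using c w0 by (intro nn_integral_cong) (simp add: sum_ennreal[symmetric] ennreal_mult)
    also have "\<dots> = (\<Sum>p\<in>P. ennreal (c p) * ennreal d)"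
    proof (subst nn_integral_sum)
      fix p assume "p \<in> P"
      then have p: "p \<in> cells k \<times> cells k" using P by auto
      show "(\<lambda>\<omega>. ennreal (c p) * ennreal (w p \<omega>)) \<in> borel_measurable M"
        using wm[OF p] by measurable
    next
      show "(\<Sum>p\<in>P. \<integral>\<^sup>+\<omega>. ennreal (c p) * ennreal (w p \<omega>) \<partial>M) = (\<Sum>p\<in>P. ennreal (c p) * ennreal d)"
      proof (rule sum.cong[OF refl])
        fix p assume "p \<in> P"
        then have p: "p \<in> cells k \<times> cells k" using P by auto
        have "(\<lambda>\<omega>. ennreal (w p \<omega>)) \<in> borel_measurable M" using wm[OF p] by measurable
        then show "(\<integral>\<^sup>+\<omega>. ennreal (c p) * ennreal (w p \<omega>) \<partial>M) = ennreal (c p) * ennreal d"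
          by (simp add: nn_integral_cmult wint[OF p])
      qed
    qed
    also have "\<dots> = ennreal (d * (\<Sum>p\<in>P. c p))"
      using c d0 by (simp add: ennreal_mult[symmetric] sum_nonneg sum_distrib_left mult.commute)
    finally show ?thesis .
  qed
  have pt: "\<bar>Ssum N Y f \<omega> j * Ssum N Y g \<omega> j'\<bar> \<le> w (j, j') \<omega>"
    if \<omega>: "\<omega> \<in> space M" and f: "f \<in> \<F>" and g: "g \<in> \<G>" and j: "j \<in> cells k" and j': "j' \<in> cells k"
    for \<omega> f g j j'
  proof -
    have a: "\<bar>Ssum N Y f \<omega> j\<bar> \<le> Ssum N Y Fe \<omega> j"
      unfolding Ssum_def using F_env[OF f Y_in[OF \<omega> j]]
      by (intro order_trans[OF sum_abs sum_mono]) auto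
    have b: "\<bar>Ssum N Y g \<omega> j'\<bar> \<le> Ssum N Y Ge \<omega> j'"
      unfolding Ssum_def using G_env[OF g Y_in[OF \<omega> j']]
      by (intro order_trans[OF sum_abs sum_mono]) auto
    define X where "X = Ssum N Y Fe \<omega> j"
    define Z where "Z = Ssum N Y Ge \<omega> j'"
    have "\<bar>Ssum N Y f \<omega> j * Ssum N Y g \<omega> j'\<bar> \<le> X * Z"
      unfolding abs_mult X_def Z_def using a b by (intro mult_mono) auto
    also have "\<dots> \<le> (X\<^sup>2 + Z\<^sup>2) / 2"
    proof -
      have "0 \<le> (X - Z)\<^sup>2" by simp
      then show ?thesis by (simp add: power2_diff)
    qed
    finally show ?thesis unfolding w_def X_def Z_def by simp
  qed
  have boxc: "box k D \<subseteq> cells k" for D unfolding box_def by auto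
  have finpairs: "finite {(j, j'). j \<in> box k D \<and> j' \<in> box k D \<and> Q j j'}" for D Q
    by (rule finite_pairs)
  have part1: "((\<lambda>n. \<integral>\<^sup>+\<omega>. (SUP fg\<in>\<F> \<times> \<G>. ennreal \<bar>
            (\<Sum>(j, j')\<in>setB k (C n) i. Ssum N Y (fst fg) \<omega> j * Ssum N Y (snd fg) \<omega> j')
               / real (card (setB k (C n) i))
          - (\<Sum>(j, j')\<in>setA k (C n) i. Ssum N Y (fst fg) \<omega> j * Ssum N Y (snd fg) \<omega> j')
               / real (card (setA k (C n) i))\<bar>) \<partial>M)
        \<longlongrightarrow> 0) sequentially" if i: "i < k" for i
  proof -
    define Ig where "Ig = (\<lambda>n. \<integral>\<^sup>+\<omega>. (SUP fg\<in>\<F> \<times> \<G>. ennreal \<bar>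
            (\<Sum>(j, j')\<in>setB k (C n) i. Ssum N Y (fst fg) \<omega> j * Ssum N Y (snd fg) \<omega> j')
               / real (card (setB k (C n) i))
          - (\<Sum>(j, j')\<in>setA k (C n) i. Ssum N Y (fst fg) \<omega> j * Ssum N Y (snd fg) \<omega> j')
               / real (card (setA k (C n) i))\<bar>) \<partial>M)"
    define rt where "rt = (\<lambda>n. real (card (setA k (C n) i)) / real (card (setB k (C n) i)))"
    have ev2: "eventually (\<lambda>n. 2 \<le> Min (C n ` {..<k})) sequentially"
      using C_lim by (simp add: filterlim_at_top)
    have bnd: "eventually (\<lambda>n. Ig n \<le> ennreal (d * (2 - 2 * rt n))) sequentially"
      using ev2
    proof eventually_elim
      case (elim n)
      have Cs: "2 \<le> C n s" if "s < k" for s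
        using elim that by (meson Min_le finite_imageI finite_lessThan imageI lessThan_iff order_trans)
      let ?B = "setB k (C n) i" and ?A = "setA k (C n) i"
      have sub: "?A \<subseteq> ?B" unfolding setA_def setB_def by auto
      have finB: "finite ?B" unfolding setB_def by (rule finpairs)
      have posA: "card ?A > 0" unfolding card_setA[OF i]
      proof (rule prod_pos)
        fix s assume "s \<in> {..<k}"
        then have "2 \<le> C n s" using Cs by simp
        then have "C n s < C n s * C n s" by (metis less_le_trans mult_less_cancel1 nat_mult_1_right one_less_numeral_iff semiring_norm(76) zero_less_iff_neq_zero not_numeral_le_zero)
        then show "0 < (if s = i then C n s else C n s * C n s - C n s)" using \<open>2 \<le> C n s\<close> by auto
      qed
      have Bc: "?B \<subseteq> cells k \<times> cells k" unfolding setB_def using boxc by blast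
      define c where "c = (\<lambda>p. if p \<in> ?A then 1 / real (card ?A) - 1 / real (card ?B) else 1 / real (card ?B))"
      have c0: "c p \<ge> 0" for p unfolding c_def using coef_nonneg[OF finB sub posA] by simp
      have "Ig n \<le> (\<integral>\<^sup>+\<omega>. ennreal (\<Sum>p\<in>?B. c p * w p \<omega>) \<partial>M)"
        unfolding Ig_def
      proof (rule nn_integral_mono, rule SUP_least, rule ennreal_leI)
        fix \<omega> fg assume \<omega>: "\<omega> \<in> space M" and fg: "fg \<in> \<F> \<times> \<G>"
        show "\<bar>(\<Sum>(j, j')\<in>?B. Ssum N Y (fst fg) \<omega> j * Ssum N Y (snd fg) \<omega> j') / real (card ?B)
          - (\<Sum>(j, j')\<in>?A. Ssum N Y (fst fg) \<omega> j * Ssum N Y (snd fg) \<omega> j') / real (card ?A)\<bar>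
          \<le> (\<Sum>p\<in>?B. c p * w p \<omega>)"
          unfolding c_def
        proof (rule diff_avg[OF finB sub posA])
          fix p assume p: "p \<in> ?B"
          then obtain j j' where pj: "p = (j, j')" "j \<in> cells k" "j' \<in> cells k" using Bc by auto
          show "\<bar>(case p of (j, j') \<Rightarrow> Ssum N Y (fst fg) \<omega> j * Ssum N Y (snd fg) \<omega> j')\<bar> \<le> w p \<omega>"
            using pt[OF \<omega> _ _ pj(2,3), of "fst fg" "snd fg"] fg pj(1) by (auto simp: mem_Times_iff)
        qed
      qed
      also have "\<dots> = ennreal (d * (\<Sum>p\<in>?B. c p))"
        using intsum[OF finB Bc] c0 by simp
      also have "(\<Sum>p\<in>?B. c p) = 2 - 2 * rt n"
        unfolding c_def rt_def using diff_avg_coef[OF finB sub posA] by simp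
      finally show ?case .
    qed
    have rt1: "(rt \<longlongrightarrow> 1) sequentially"
      unfolding rt_def card_setA[OF i] card_setB[OF i] using ratio_lim[OF C_lim C_pos] .
    have "((\<lambda>n. ennreal (d * (2 - 2 * rt n))) \<longlongrightarrow> ennreal (d * (2 - 2 * 1))) sequentially"
      by (intro tendsto_ennrealI tendsto_intros rt1)
    then have lim: "((\<lambda>n. ennreal (d * (2 - 2 * rt n))) \<longlongrightarrow> 0) sequentially" by simp
    have "(Ig \<longlongrightarrow> 0) sequentially"
      by (rule tendsto_sandwich[OF _ bnd tendsto_const lim]) simp
    then show ?thesis unfolding Ig_def .
  qed
  have part2: "\<exists>K::real. eventually (\<lambda>n.
          ennreal (1 / (real (\<Prod>i<k. C n i))\<^sup>2) *
          (\<integral>\<^sup>+\<omega>. (SUP fg\<in>\<F> \<times> \<G>. ennreal \<bar>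
            \<Sum>(j, j')\<in>setBe k (C n) e. Ssum N Y (fst fg) \<omega> j * Ssum N Y (snd fg) \<omega> j'\<bar>) \<partial>M)
          \<le> ennreal (K * real (Min ((C n) ` {..<k})) powr (- real r))) sequentially"
    if r: "1 \<le> r" and e: "\<forall>i<k. e i \<in> {0, 1}" and er: "(\<Sum>i<k. e i) = r" for r e
  proof (intro exI[of _ d] always_eventually allI)
    fix n
    let ?Be = "setBe k (C n) e"
    define m where "m = Min (C n ` {..<k})"
    define P where "P = (\<Prod>i<k. C n i)"
    have Cm: "m \<le> C n s" if "s < k" for s unfolding m_def using that by simp
    have m1: "1 \<le> m"
    proof -
      have "m \<in> C n ` {..<k}" unfolding m_def using k by (intro Min_in) (auto simp: lessThan_empty_iff)
      then show ?thesis using C_pos by auto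
    qed
    have P0: "P > 0" unfolding P_def using C_pos by (intro prod_pos) (auto intro: less_le_trans)
    have finBe: "finite ?Be" unfolding setBe_def by (rule finpairs)
    have Bec: "?Be \<subseteq> cells k \<times> cells k" unfolding setBe_def using boxc by blast
    have I: "(\<integral>\<^sup>+\<omega>. (SUP fg\<in>\<F> \<times> \<G>. ennreal \<bar>
            \<Sum>(j, j')\<in>?Be. Ssum N Y (fst fg) \<omega> j * Ssum N Y (snd fg) \<omega> j'\<bar>) \<partial>M)
          \<le> ennreal (d * real (card ?Be))"
    proof -
      have "(\<integral>\<^sup>+\<omega>. (SUP fg\<in>\<F> \<times> \<G>. ennreal \<bar>
            \<Sum>(j, j')\<in>?Be. Ssum N Y (fst fg) \<omega> j * Ssum N Y (snd fg) \<omega> j'\<bar>) \<partial>M)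
          \<le> (\<integral>\<^sup>+\<omega>. ennreal (\<Sum>p\<in>?Be. 1 * w p \<omega>) \<partial>M)"
      proof (rule nn_integral_mono, rule SUP_least, rule ennreal_leI)
        fix \<omega> fg assume \<omega>: "\<omega> \<in> space M" and fg: "fg \<in> \<F> \<times> \<G>"
        have "\<bar>\<Sum>(j, j')\<in>?Be. Ssum N Y (fst fg) \<omega> j * Ssum N Y (snd fg) \<omega> j'\<bar>
            \<le> (\<Sum>p\<in>?Be. \<bar>(case p of (j, j') \<Rightarrow> Ssum N Y (fst fg) \<omega> j * Ssum N Y (snd fg) \<omega> j')\<bar>)"
          by (rule sum_abs)
        also have "\<dots> \<le> (\<Sum>p\<in>?Be. 1 * w p \<omega>)"
        proof (rule sum_mono)
          fix p assume p: "p \<in> ?Be"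
          then obtain j j' where pj: "p = (j, j')" "j \<in> cells k" "j' \<in> cells k" using Bec by auto
          show "\<bar>(case p of (j, j') \<Rightarrow> Ssum N Y (fst fg) \<omega> j * Ssum N Y (snd fg) \<omega> j')\<bar> \<le> 1 * w p \<omega>"
            using pt[OF \<omega> _ _ pj(2,3), of "fst fg" "snd fg"] fg pj(1) by (auto simp: mem_Times_iff)
        qed
        finally show "\<bar>\<Sum>(j, j')\<in>?Be. Ssum N Y (fst fg) \<omega> j * Ssum N Y (snd fg) \<omega> j'\<bar>
            \<le> (\<Sum>p\<in>?Be. 1 * w p \<omega>)" .
      qed
      also have "\<dots> = ennreal (d * (\<Sum>p\<in>?Be. 1))"
        by (rule intsum[OF finBe Bec]) simp
      finally show ?thesis by simp
    qed
    have nat: "card ?Be * m ^ r \<le> P * P"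
    proof -
      have "card ?Be * m ^ r = (\<Prod>s<k. (if e s = 1 then C n s else C n s * C n s) * m ^ e s)"
        unfolding card_setBe er[symmetric] power_sum prod.distrib ..
      also have "\<dots> \<le> (\<Prod>s<k. C n s * C n s)"
      proof (rule prod_mono)
        fix s assume s: "s \<in> {..<k}"
        then have "e s \<in> {0, 1}" using e by auto
        moreover have "m \<le> C n s" using Cm s by simp
        ultimately show "0 \<le> (if e s = 1 then C n s else C n s * C n s) * m ^ e s \<and>
           (if e s = 1 then C n s else C n s * C n s) * m ^ e s \<le> C n s * C n s"
          by auto
      qed
      also have "\<dots> = P * P" unfolding P_def prod.distrib ..
      finally show ?thesis .
    qed
    have rl: "1 / (real P)\<^sup>2 * (d * real (card ?Be)) \<le> d * real m powr (- real r)"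
    proof -
      have mpos: "real m > 0" using m1 by simp
      have "real (card ?Be) * real m ^ r \<le> real P * real P"
        using nat by (metis of_nat_le_iff of_nat_mult of_nat_power)
      then have "real (card ?Be) / (real P)\<^sup>2 \<le> 1 / real m ^ r"
        using P0 mpos by (simp add: field_simps power2_eq_square)
      then have "d * (real (card ?Be) / (real P)\<^sup>2) \<le> d * (1 / real m ^ r)"
        using d0 by (intro mult_left_mono)
      then show ?thesis using mpos by (simp add: powr_minus powr_realpow divide_inverse mult.commute mult.left_commute)
    qed
    have "ennreal (1 / (real (\<Prod>i<k. C n i))\<^sup>2) *
          (\<integral>\<^sup>+\<omega>. (SUP fg\<in>\<F> \<times> \<G>. ennreal \<bar>
            \<Sum>(j, j')\<in>?Be. Ssum N Y (fst fg) \<omega> j * Ssum N Y (snd fg) \<omega> j'\<bar>) \<partial>M)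
        \<le> ennreal (1 / (real P)\<^sup>2) * ennreal (d * real (card ?Be))"
      unfolding P_def by (rule mult_left_mono[OF I]) simp
    also have "\<dots> = ennreal (1 / (real P)\<^sup>2 * (d * real (card ?Be)))"
      using d0 by (intro ennreal_mult[symmetric]) auto
    also have "\<dots> \<le> ennreal (d * real m powr (- real r))"
      by (rule ennreal_leI[OF rl])
    finally show "ennreal (1 / (real (\<Prod>i<k. C n i))\<^sup>2) *
          (\<integral>\<^sup>+\<omega>. (SUP fg\<in>\<F> \<times> \<G>. ennreal \<bar>
            \<Sum>(j, j')\<in>?Be. Ssum N Y (fst fg) \<omega> j * Ssum N Y (snd fg) \<omega> j'\<bar>) \<partial>M)
          \<le> ennreal (d * real (Min ((C n) ` {..<k})) powr (- real r))"
      unfolding m_def .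
  qed
  show ?thesis using part1 part2 by blast
qed

end
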